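(* Let $\mu,\nu>0$; for integers $N>\max(\mu,\nu)$ let $v=\mu/N$, $w=\nu/N$, $S=\{0,\dots,N\}$ and \[ P_{ij}=(1-v)^{N-i}(1-w)^i\sum_{\substack{\ell,m\ge0:\ \ell-m=j-i}}\binom{N-i}{\ell}\binom{i}{m}\Big(\frac v{1-v}\Big)^\ell\Big(\frac w{1-w}\Big)^m. \] For $z\in[0,1]$ and $k\in\mathbb{Z}$ let $p_k(z)=\mathbb{P}(X-Y=k)$ with independent $X\sim\mathrm{Poi}_{\mu(1-z)}$, $Y\sim\mathrm{Poi}_{\nu z}$. Then \[ \sum_{j\in S}\Big|\sqrt{P_{ij}P_{ji}}-\sqrt{p_{j-i}(i/N)\,p_{i-j}(i/N)}\Big|=\mathcal{O}(1/N) \] uniformly in $i$ as long as $i/N$ is bounded away from $0$ and $1$; that is, for every $\delta\in(0,1/2)$ there is $C_\delta<\infty$ such that the left side is at most $C_\delta/N$ for all such $N$ and all $i\in S$ with $\delta\le i/N\le1-\delta$.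
   Context: $\mathrm{Poi}_\lambda$ is the Poisson distribution with parameter $\lambda$ ($\mathrm{Poi}_0$ the point mass at $0$). *)

theory Defs
  imports "HOL-Analysis.Analysis"
begin

text \<open>Poisson probability mass function with parameter a \<ge> 0 (a = 0 gives the point mass at 0,
  since 0^0 = 1).\<close>
definition poi :: "real \<Rightarrow> nat \<Rightarrow> real" where
  "poi a n = a ^ n / fact n * exp (- a)"

text \<open>p_k(z) = P(X - Y = k), X ~ Poi(mu(1-z)), Y ~ Poi(nu z) independent:
  sum over the value m of Y.\<close>
definition pdiff :: "real \<Rightarrow> real \<Rightarrow> real \<Rightarrow> int \<Rightarrow> real" where
  "pdiff \<mu> \<nu> z k =
     (\<Sum>m::nat. if k + int m \<ge> 0
                then poi (\<mu> * (1 - z)) (nat (k + int m)) * poi (\<nu> * z) m else 0)"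

text \<open>Transition matrix P_ij with v = mu/N, w = nu/N. Binomial coefficients vanish outside
  0 \<le> l \<le> N-i, 0 \<le> m \<le> i, so the sum over l,m \<ge> 0 is the finite sum below.\<close>
definition Pmat :: "real \<Rightarrow> real \<Rightarrow> nat \<Rightarrow> nat \<Rightarrow> nat \<Rightarrow> real" where
  "Pmat \<mu> \<nu> N i j =
     (let v = \<mu> / real N; w = \<nu> / real N in
       (1 - v) ^ (N - i) * (1 - w) ^ i *
       (\<Sum>(l, m) \<in> {(l, m). l \<le> N - i \<and> m \<le> i \<and> int l - int m = int j - int i}.
          real ((N - i) choose l) * real (i choose m) * (v / (1 - v)) ^ l * (w / (1 - w)) ^ m))"

end

theory Submission
  imports Defs
begin


definition H :: "real \<Rightarrow> nat \<Rightarrow> real" where "H x l = x ^ l / fact l"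

lemma H_sums: "H x sums exp x"
proof -
  have "H x = (\<lambda>n. inverse (fact n) * x ^ n)" by (auto simp: H_def fun_eq_iff field_simps)
  then show ?thesis using exp_converges[of x] by (simp add: divide_inverse mult.commute)
qed

lemma H_summable: "summable (H x)" using H_sums by (rule sums_summable)
lemma H_suminf: "suminf (H x) = exp x" using H_sums by (rule sums_unique[symmetric])
lemma H_nonneg: "0 \<le> x \<Longrightarrow> 0 \<le> H x l" by (simp add: H_def)
lemma H_mono: "0 \<le> x \<Longrightarrow> x \<le> y \<Longrightarrow> H x l \<le> H y l"
  by (simp add: H_def divide_right_mono power_mono)
lemma H_le_exp: "0 \<le> x \<Longrightarrow> H x l \<le> exp x"
proof -
  assume x: "0 \<le> x"
  have "sum (H x) {l} \<le> suminf (H x)"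
    by (rule sum_le_suminf) (auto simp: H_summable H_nonneg x)
  then show ?thesis by (simp add: H_suminf)
qed
lemma H_mult: "H x l * y ^ l = H (x*y) l" by (simp add: H_def power_mult_distrib)

lemma exp_lip: "0 \<le> (a::real) \<Longrightarrow> 0 \<le> b \<Longrightarrow> \<bar>exp (-a) - exp (-b)\<bar> \<le> \<bar>a - b\<bar>"
proof -
  have *: "exp (-a) - exp (-b) \<le> b - a" if "0 \<le> a" "a \<le> b" for a b :: real
  proof -
    have "exp (-a) - exp (-b) = exp (-a) * (1 - exp (-(b-a)))" by (simp add: algebra_simps exp_diff exp_minus field_simps)
    also have "\<dots> \<le> 1 * (1 - exp (-(b-a)))"
      by (rule mult_right_mono) (use that in auto)
    also have "\<dots> = 1 - exp (a - b)" by simp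
    also have "\<dots> \<le> b - a" using exp_ge_add_one_self[of "a-b"] by linarith
    finally show ?thesis .
  qed
  assume "0 \<le> a" "0 \<le> b"
  then show ?thesis
    by (cases "a \<le> b") (use *[of a b] *[of b a] in auto)
qed

lemma pow_lip: "0 \<le> (x::real) \<Longrightarrow> 0 \<le> y \<Longrightarrow> x \<le> M \<Longrightarrow> y \<le> M \<Longrightarrow> \<bar>x^n - y^n\<bar> \<le> real n * M^(n-1) * \<bar>x - y\<bar>"
proof (induction n)
  case 0 then show ?case by simp
next
  case (Suc n)
  have M: "0 \<le> M" using Suc by linarith
  have "x^Suc n - y^Suc n = x * (x^n - y^n) + y^n * (x - y)" by (simp add: algebra_simps)
  then have "\<bar>x^Suc n - y^Suc n\<bar> \<le> x * \<bar>x^n - y^n\<bar> + y^n * \<bar>x - y\<bar>"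
    using Suc.prems abs_triangle_ineq[of "x * (x^n - y^n)" "y^n * (x - y)"] by (simp add: abs_mult)
  also have "\<dots> \<le> M * (real n * M^(n-1) * \<bar>x - y\<bar>) + M^n * \<bar>x - y\<bar>"
    using Suc by (intro add_mono mult_mono power_mono) auto
  also have "\<dots> = real (Suc n) * M ^ (Suc n - 1) * \<bar>x - y\<bar>"
    by (cases n) (auto simp: algebra_simps)
  finally show ?case .
qed



lemma choose_step: "Suc k * (n choose Suc k) = (n - k) * (n choose k)"
proof (cases n)
  case 0 then show ?thesis by simp
next
  case (Suc m)
  then show ?thesis using Suc_times_binomial[of k m] binomial_absorb_comp[of n k] by simp
qed

lemma ffact_bounds_aux:
  "l \<le> n \<Longrightarrow> real (n choose l) * fact l \<le> real n ^ l \<and>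
    real n ^ l \<le> real (n choose l) * fact l + real l ^ 2 * real n ^ (l - 1)"
proof (induction l)
  case 0
  show ?case by simp
next
  case (Suc l)
  have st: "real (n choose Suc l) * fact (Suc l) = real (n choose l) * fact l * (real n - real l)"
  proof -
    have "real (Suc l * (n choose Suc l)) = real ((n - l) * (n choose l))" using choose_step by metis
    then have "real (Suc l) * real (n choose Suc l) = (real n - real l) * real (n choose l)"
      using Suc.prems by (simp add: of_nat_diff algebra_simps)
    have "real (n choose Suc l) * fact (Suc l) = fact l * (real (Suc l) * real (n choose Suc l))"
      by (simp add: algebra_simps)
    also have "\<dots> = fact l * ((real n - real l) * real (n choose l))" using \<open>real (Suc l) * _ = _\<close> by simp
    finally show ?thesis by (simp add: algebra_simps)
  qed
  have l: "l \<le> n" "real l \<le> real n" using Suc.prems by auto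
  have i1: "real (n choose l) * fact l \<le> real n ^ l" using Suc.IH l by auto
  have i2: "real n ^ l \<le> real (n choose l) * fact l + real l ^ 2 * real n ^ (l - 1)" using Suc.IH l by auto
  have c1: "real (n choose Suc l) * fact (Suc l) \<le> real n ^ Suc l"
  proof -
    have "real (n choose l) * fact l * (real n - real l) \<le> real n ^ l * real n"
      using i1 l by (intro mult_mono) auto
    then show ?thesis using st by (simp add: algebra_simps)
  qed
  have nl: "0 \<le> real n - real l" using l by simp
  have "real n ^ l * (real n - real l) \<le> (real (n choose l) * fact l + real l ^ 2 * real n ^ (l - 1)) * (real n - real l)"
    using i2 nl by (rule mult_right_mono)
  also have "\<dots> = real (n choose Suc l) * fact (Suc l) + real l ^ 2 * (real n ^ (l - 1) * (real n - real l))"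
    using st by (simp add: algebra_simps)
  also have "\<dots> \<le> real (n choose Suc l) * fact (Suc l) + real l ^ 2 * real n ^ l"
  proof -
    have "real l ^ 2 * (real n ^ (l - 1) * (real n - real l)) \<le> real l ^ 2 * real n ^ l"
    proof (cases l)
      case 0 then show ?thesis by simp
    next
      case (Suc l')
      have "real n ^ (l - 1) * (real n - real l) \<le> real n ^ l"
        using nl Suc by (simp add: algebra_simps mult_left_mono)
      then show ?thesis by (simp add: mult_left_mono)
    qed
    then show ?thesis by simp
  qed
  finally have "real n ^ Suc l \<le> real (n choose Suc l) * fact (Suc l) + real l ^ 2 * real n ^ l + real l * real n ^ l"
    by (simp add: algebra_simps)
  also have "\<dots> \<le> real (n choose Suc l) * fact (Suc l) + real (Suc l) ^ 2 * real n ^ (Suc l - 1)"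
    by (simp add: algebra_simps power2_eq_square)
  finally show ?case using c1 by simp
qed

lemma ffact_bounds:
  assumes "l \<le> n"
  shows "real (n choose l) * fact l \<le> real n ^ l"
    and "real n ^ l \<le> real (n choose l) * fact l + real l ^ 2 * real n ^ (l - 1)"
  using ffact_bounds_aux[OF assms] by auto



definition bn :: "nat \<Rightarrow> real \<Rightarrow> nat \<Rightarrow> real" where
  "bn n p l = real (n choose l) * p ^ l * (1 - p) ^ (n - l)"

lemma poly3: "real l ^ 2 + real l + 1 \<le> 3 * 3 ^ l"
proof (induction l)
  case 0 then show ?case by simp
next
  case (Suc l)
  have "real (Suc l) ^ 2 + real (Suc l) + 1 = (real l ^ 2 + real l + 1) + 2 * real l + 2"
    by (simp add: power2_eq_square algebra_simps)
  also have "\<dots> \<le> 3 * (real l ^ 2 + real l + 1)" by (simp add: power2_eq_square algebra_simps)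
  also have "\<dots> \<le> 3 * (3 * 3 ^ l)" using Suc by simp
  finally show ?case by simp
qed

lemma exp_minus_bounds: "0 \<le> (p::real) \<Longrightarrow> \<bar>(1 - p) - exp (-p)\<bar> \<le> p ^ 2"
proof -
  assume p: "0 \<le> p"
  have lo: "1 - p \<le> exp (-p)" using exp_ge_add_one_self[of "-p"] by simp
  have "0 \<le> (p - 1/2)^2" by simp
  then have q: "0 \<le> 1 - p + p^2" by (simp add: power2_eq_square algebra_simps)
  have "exp p * (1 - p + p^2) \<ge> (1 + p) * (1 - p + p^2)"
    using exp_ge_add_one_self[of p] q by (intro mult_right_mono) (auto simp: algebra_simps)
  also have "(1 + p) * (1 - p + p^2) = 1 + p^3" by (simp add: power2_eq_square power3_eq_cube algebra_simps)
  also have "\<dots> \<ge> 1" using p by simp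
  finally have "exp (-p) \<le> 1 - p + p^2" by (simp add: exp_minus field_simps)
  with lo show ?thesis by simp
qed

lemma BP:
  assumes p: "0 \<le> p" "p \<le> 1" and lamM: "real n * p \<le> M" and M: "1 \<le> M"
  shows "\<bar>bn n p l - poi (real n * p) l\<bar> \<le> p * (3 * (M + 1)) * H (3 * M) l"
proof -
  define lam where "lam = real n * p"
  have l0: "0 \<le> lam" using p by (simp add: lam_def)
  have lM: "lam \<le> M" using lamM by (simp add: lam_def)
  have key: "\<bar>bn n p l - poi lam l\<bar> \<le> p * (M ^ l * (real l ^ 2 + real l + M)) / fact l"
  proof (cases "l \<le> n")
    case False
    then have b0: "bn n p l = 0" by (simp add: bn_def)
    have lpos: "1 \<le> l" using False by simp
    have "lam ^ l * exp (- lam) \<le> lam ^ l" using l0 by (intro mult_left_le) auto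
    then have "poi lam l \<le> lam ^ l / fact l" by (simp add: poi_def divide_right_mono)
    moreover have "lam ^ l \<le> p * (real l * M ^ l)"
    proof -
      have "lam ^ l = lam * lam ^ (l - 1)" using lpos by (simp add: power_eq_if)
      also have "\<dots> \<le> (real l * p) * M ^ l"
      proof (rule mult_mono)
        show "lam \<le> real l * p" using False p by (simp add: lam_def mult_right_mono)
        have "lam ^ (l - 1) \<le> M ^ (l - 1)" using l0 lM by (simp add: power_mono)
        also have "\<dots> \<le> M ^ l" using M by (simp add: power_increasing)
        finally show "lam ^ (l - 1) \<le> M ^ l" .
      qed (use p l0 in auto)
      finally show ?thesis by (simp add: algebra_simps)
    qed
    moreover have "0 \<le> poi lam l" using l0 by (simp add: poi_def)
    ultimately have "\<bar>bn n p l - poi lam l\<bar> \<le> p * (real l * M ^ l) / fact l"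
      using b0 divide_right_mono[of "lam ^ l" "p * (real l * M ^ l)" "fact l"] by simp
    also have "\<dots> \<le> p * (M ^ l * (real l ^ 2 + real l + M)) / fact l"
      using p M by (intro divide_right_mono mult_left_mono) (auto simp: algebra_simps)
    finally show ?thesis .
  next
    case True
    define q where "q = (1 - p) ^ (n - l)"
    define P where "P = real (n choose l) * fact l"
    have q01: "0 \<le> q" "q \<le> 1" using p by (auto simp: q_def power_le_one)
    have P1: "P \<le> real n ^ l" and P2: "real n ^ l \<le> P + real l ^ 2 * real n ^ (l - 1)"
      using ffact_bounds[OF True] by (auto simp: P_def)
    have eb: "bn n p l = p ^ l / fact l * (P * q)" by (simp add: bn_def P_def q_def)
    have ep: "poi lam l = p ^ l / fact l * (real n ^ l * exp (-lam))"
      by (simp add: poi_def lam_def power_mult_distrib)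
    have qe: "\<bar>q - exp (-lam)\<bar> \<le> lam * p + p * real l"
    proof -
      have "\<bar>q - exp (-p) ^ (n - l)\<bar> \<le> real (n - l) * 1 ^ (n - l - 1) * \<bar>(1 - p) - exp (-p)\<bar>"
        unfolding q_def by (rule pow_lip) (use p in auto)
      also have "\<dots> \<le> real (n - l) * p ^ 2"
        using exp_minus_bounds[OF p(1)] by (simp add: mult_left_mono)
      also have "\<dots> \<le> lam * p"
      proof -
        have "real (n - l) * (p * p) \<le> real n * (p * p)" using p by (intro mult_right_mono) auto
        then show ?thesis by (simp add: lam_def power2_eq_square mult.assoc)
      qed
      finally have a: "\<bar>q - exp (-p) ^ (n - l)\<bar> \<le> lam * p" .
      have e1: "exp (-p) ^ (n - l) = exp (- (p * real (n - l)))" by (simp add: exp_of_nat_mult[symmetric] algebra_simps)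
      have "\<bar>exp (- (p * real (n - l))) - exp (-lam)\<bar> \<le> \<bar>p * real (n - l) - lam\<bar>"
        by (rule exp_lip) (use p l0 in auto)
      also have "\<dots> = p * real l" using True p by (simp add: lam_def of_nat_diff algebra_simps)
      finally have b: "\<bar>exp (-p) ^ (n - l) - exp (-lam)\<bar> \<le> p * real l" using e1 by simp
      show ?thesis using a b by linarith
    qed
    have "\<bar>P * q - real n ^ l * exp (-lam)\<bar> \<le> \<bar>P - real n ^ l\<bar> * q + real n ^ l * \<bar>q - exp (-lam)\<bar>"
    proof -
      have "P * q - real n ^ l * exp (-lam) = (P - real n ^ l) * q + real n ^ l * (q - exp (-lam))"
        by (simp add: algebra_simps)
      then show ?thesis using q01 by (simp add: abs_mult abs_triangle_ineq[THEN order_trans])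
    qed
    also have "\<dots> \<le> real l ^ 2 * real n ^ (l - 1) * 1 + real n ^ l * (lam * p + p * real l)"
      using P1 P2 q01 qe by (intro add_mono mult_mono mult_left_mono) auto
    finally have d: "\<bar>P * q - real n ^ l * exp (-lam)\<bar> \<le> real l ^ 2 * real n ^ (l - 1) + real n ^ l * (lam * p + p * real l)"
      by simp
    have "\<bar>bn n p l - poi lam l\<bar> = p ^ l / fact l * \<bar>P * q - real n ^ l * exp (-lam)\<bar>"
    proof -
      have "bn n p l - poi lam l = p ^ l / fact l * (P * q - real n ^ l * exp (-lam))"
        by (simp add: eb ep right_diff_distrib)
      then show ?thesis using p by (simp add: abs_mult)
    qed
    also have "\<dots> \<le> p ^ l / fact l * (real l ^ 2 * real n ^ (l - 1) + real n ^ l * (lam * p + p * real l))"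
      using d p by (intro mult_left_mono) auto
    also have "\<dots> = (real l ^ 2 * (p ^ l * real n ^ (l - 1)) + lam ^ l * p * (lam + real l)) / fact l"
      by (simp add: lam_def power_mult_distrib algebra_simps add_divide_distrib)
    also have "\<dots> \<le> (real l ^ 2 * (p * M ^ l) + M ^ l * p * (M + real l)) / fact l"
    proof (intro divide_right_mono add_mono)
      show "real l ^ 2 * (p ^ l * real n ^ (l - 1)) \<le> real l ^ 2 * (p * M ^ l)"
      proof (cases l)
        case 0 then show ?thesis by simp
      next
        case (Suc l')
        have "p ^ l * real n ^ (l - 1) = p * lam ^ l'" using Suc by (simp add: lam_def power_mult_distrib)
        also have "\<dots> \<le> p * M ^ l'" using p l0 lM by (intro mult_left_mono power_mono) auto
        also have "\<dots> \<le> p * M ^ l" using p M Suc by (intro mult_left_mono power_increasing) auto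
        finally show ?thesis by (intro mult_left_mono) auto
      qed
      have "lam ^ l \<le> M ^ l" using l0 lM by (intro power_mono)
      then show "lam ^ l * p * (lam + real l) \<le> M ^ l * p * (M + real l)"
        using p l0 lM by (intro mult_mono) auto
    qed (use p l0 lM M in auto)
    also have "\<dots> = p * (M ^ l * (real l ^ 2 + real l + M)) / fact l" by (simp add: algebra_simps)
    finally show ?thesis by (simp add: lam_def)
  qed
  also have "\<dots> \<le> p * (3 * (M + 1)) * H (3 * M) l"
  proof -
    have "M ^ l * (real l ^ 2 + real l + M) \<le> M ^ l * ((M + 1) * (3 * 3 ^ l))"
    proof (rule mult_left_mono)
      have "real l ^ 2 + real l + M \<le> (M + 1) * (real l ^ 2 + real l + 1)"
        using M by (simp add: algebra_simps)
      also have "\<dots> \<le> (M + 1) * (3 * 3 ^ l)" using M poly3[of l] by (intro mult_left_mono) auto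
      finally show "real l ^ 2 + real l + M \<le> (M + 1) * (3 * 3 ^ l)" .
    qed (use M in auto)
    then have "p * (M ^ l * (real l ^ 2 + real l + M)) \<le> p * (M ^ l * ((M + 1) * (3 * 3 ^ l)))"
      by (rule mult_left_mono) (use p in auto)
    then have "p * (M ^ l * (real l ^ 2 + real l + M)) / fact l \<le> p * (M ^ l * ((M + 1) * (3 * 3 ^ l))) / fact l"
      by (rule divide_right_mono) auto
    also have "\<dots> = p * (3 * (M + 1)) * H (3 * M) l" by (simp add: H_def power_mult_distrib algebra_simps add_divide_distrib)
    finally show ?thesis .
  qed
  finally show ?thesis by (simp add: lam_def)
qed



lemma poi_nonneg: "0 \<le> a \<Longrightarrow> 0 \<le> poi a l" by (simp add: poi_def)

lemma poi_le_H: "0 \<le> a \<Longrightarrow> a \<le> M \<Longrightarrow> poi a l \<le> H M l"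
proof -
  assume a: "0 \<le> a" "a \<le> M"
  have "a ^ l * exp (-a) \<le> M ^ l * 1" using a by (intro mult_mono power_mono) auto
  then show ?thesis by (simp add: poi_def H_def divide_right_mono)
qed

lemma poi_lip:
  assumes "0 \<le> a" "a \<le> M" "0 \<le> b" "b \<le> M" "1 \<le> M"
  shows "\<bar>poi a l - poi b l\<bar> \<le> \<bar>a - b\<bar> * H (2 * M) l"
proof -
  have "a ^ l * exp (-a) - b ^ l * exp (-b) = (a ^ l - b ^ l) * exp (-a) + b ^ l * (exp (-a) - exp (-b))"
    by (simp add: algebra_simps)
  then have "\<bar>a ^ l * exp (-a) - b ^ l * exp (-b)\<bar> \<le> \<bar>a ^ l - b ^ l\<bar> * exp (-a) + b ^ l * \<bar>exp (-a) - exp (-b)\<bar>"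
    using assms by (simp add: abs_mult abs_triangle_ineq[THEN order_trans])
  also have "\<dots> \<le> (real l * M ^ (l - 1) * \<bar>a - b\<bar>) * 1 + M ^ l * \<bar>a - b\<bar>"
    using assms pow_lip[of a b M l] exp_lip[of a b] by (intro add_mono mult_mono power_mono) auto
  also have "\<dots> \<le> (real l * M ^ l * \<bar>a - b\<bar>) + M ^ l * \<bar>a - b\<bar>"
  proof -
    have "M ^ (l - 1) \<le> M ^ l" using assms by (intro power_increasing) auto
    then show ?thesis using assms by (simp add: mult_left_mono mult_right_mono)
  qed
  also have "\<dots> = (real l + 1) * M ^ l * \<bar>a - b\<bar>" by (simp add: algebra_simps)
  also have "\<dots> \<le> 2 ^ l * M ^ l * \<bar>a - b\<bar>"
  proof -
    have "real l + 1 \<le> 2 ^ l"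
    proof (induction l)
      case (Suc l) then show ?case by simp
    qed simp
    then show ?thesis using assms by (intro mult_right_mono) auto
  qed
  finally have "\<bar>a ^ l * exp (-a) - b ^ l * exp (-b)\<bar> / fact l \<le> 2 ^ l * M ^ l * \<bar>a - b\<bar> / fact l"
    by (rule divide_right_mono) auto
  then show ?thesis
    by (simp add: poi_def H_def power_mult_distrib diff_divide_distrib[symmetric] algebra_simps)
qed

lemma bn_nonneg: "0 \<le> p \<Longrightarrow> p \<le> 1 \<Longrightarrow> 0 \<le> bn n p l" by (simp add: bn_def)

lemma bn_le:
  assumes p: "0 \<le> p" "p \<le> 1" and lamM: "real n * p \<le> M"
  shows "bn n p l \<le> (real n * p) ^ l / fact l" and "bn n p l \<le> exp M * poi (real n * p) l"
    and "bn n p l \<le> H M l"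
proof -
  have m: "bn n p l \<le> (real n * p) ^ l / fact l"
  proof (cases "l \<le> n")
    case False then show ?thesis using p by (simp add: bn_def binomial_eq_0)
  next
    case True
    have "bn n p l = p ^ l / fact l * ((real (n choose l) * fact l) * (1 - p) ^ (n - l))" by (simp add: bn_def)
    also have "\<dots> \<le> p ^ l / fact l * (real n ^ l * 1)"
      using ffact_bounds(1)[OF True] p by (intro mult_left_mono mult_mono) (auto simp: power_le_one)
    finally show ?thesis by (simp add: power_mult_distrib mult.commute)
  qed
  then show "bn n p l \<le> (real n * p) ^ l / fact l" .
  have l0: "0 \<le> real n * p" using p by simp
  have "(real n * p) ^ l / fact l = exp (real n * p) * poi (real n * p) l"
    by (simp add: poi_def exp_minus field_simps)
  also have "\<dots> \<le> exp M * poi (real n * p) l"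
    using lamM l0 by (intro mult_right_mono poi_nonneg) auto
  finally show "bn n p l \<le> exp M * poi (real n * p) l" using m by linarith
  have "(real n * p) ^ l / fact l \<le> M ^ l / fact l"
    using l0 lamM by (intro divide_right_mono power_mono) auto
  then show "bn n p l \<le> H M l" using m by (simp add: H_def)
qed



definition Dk :: "(nat \<Rightarrow> real) \<Rightarrow> (nat \<Rightarrow> real) \<Rightarrow> int \<Rightarrow> nat \<Rightarrow> real" where
  "Dk f g k m = (if 0 \<le> k + int m then f (nat (k + int m)) * g m else 0)"

lemma Dk_summable:
  assumes "\<And>l. \<bar>f l\<bar> \<le> B" "\<And>m. \<bar>g m\<bar> \<le> h m" "summable h"
  shows "summable (Dk f g k)"
proof (rule summable_comparison_test[where g = "\<lambda>m. B * h m"])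
  show "summable (\<lambda>m. B * h m)" using assms(3) by (rule summable_mult)
  show "\<exists>N. \<forall>n\<ge>N. norm (Dk f g k n) \<le> B * h n"
  proof (intro exI allI impI)
    fix n
    have B: "0 \<le> B" using assms(1)[of 0] by linarith
    have "\<bar>f (nat (k + int n)) * g n\<bar> \<le> B * h n"
      unfolding abs_mult using assms(1,2) B by (intro mult_mono) auto
    moreover have "0 \<le> B * h n" using B assms(2)[of n] by (intro mult_nonneg_nonneg) auto
    ultimately show "norm (Dk f g k n) \<le> B * h n" by (simp add: Dk_def)
  qed
qed

lemma Dk_H_summable: "0 \<le> G \<Longrightarrow> summable (Dk (H G) (H G) k)"
  by (rule Dk_summable[where B = "exp G" and h = "H G"])
     (auto simp: H_le_exp H_nonneg H_summable abs_of_nonneg)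

lemma Dk_nonneg: "(\<And>l. 0 \<le> f l) \<Longrightarrow> (\<And>m. 0 \<le> g m) \<Longrightarrow> 0 \<le> Dk f g k m"
  by (simp add: Dk_def)

lemma Dk_diff:
  assumes "\<And>l. \<bar>f1 l - g1 l\<bar> \<le> e * h l" "\<And>m. \<bar>f2 m - g2 m\<bar> \<le> e * h m"
    "\<And>m. \<bar>f2 m\<bar> \<le> E * h m" "\<And>l. \<bar>g1 l\<bar> \<le> E * h l" "\<And>l. 0 \<le> h l" "0 \<le> e" "0 \<le> E"
  shows "\<bar>Dk f1 f2 k m - Dk g1 g2 k m\<bar> \<le> 2 * e * E * Dk h h k m"
proof (cases "0 \<le> k + int m")
  case True
  define l where "l = nat (k + int m)"
  have "f1 l * f2 m - g1 l * g2 m = (f1 l - g1 l) * f2 m + g1 l * (f2 m - g2 m)" by (simp add: algebra_simps)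
  then have "\<bar>f1 l * f2 m - g1 l * g2 m\<bar> \<le> \<bar>f1 l - g1 l\<bar> * \<bar>f2 m\<bar> + \<bar>g1 l\<bar> * \<bar>f2 m - g2 m\<bar>"
    by (simp add: abs_mult abs_triangle_ineq[THEN order_trans])
  also have "\<dots> \<le> (e * h l) * (E * h m) + (E * h l) * (e * h m)"
    using assms by (intro add_mono mult_mono) auto
  also have "\<dots> = 2 * e * E * (h l * h m)" by (simp add: algebra_simps)
  finally show ?thesis using True by (simp add: Dk_def l_def)
qed (simp add: Dk_def)

lemma suminf_diff_le:
  fixes A B C :: "nat \<Rightarrow> real"
  assumes "summable A" "summable B" "summable C" "\<And>m. \<bar>A m - B m\<bar> \<le> C m"
  shows "\<bar>suminf A - suminf B\<bar> \<le> suminf C"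
proof -
  have s: "summable (\<lambda>m. A m - B m)" using assms(1,2) by (rule summable_diff)
  have "\<bar>suminf A - suminf B\<bar> = \<bar>\<Sum>m. A m - B m\<bar>" using assms by (simp add: suminf_diff)
  also have "\<dots> \<le> (\<Sum>m. \<bar>A m - B m\<bar>)"
    by (rule summable_rabs) (rule summable_comparison_test[OF _ assms(3)], use assms(4) in auto)
  also have "\<dots> \<le> suminf C"
    by (rule suminf_le) (use assms in \<open>auto intro: summable_comparison_test[OF _ assms(3)]\<close>)
  finally show ?thesis .
qed

lemma Dk_weight:
  assumes "1 \<le> W" "0 \<le> G"
  shows "W ^ nat \<bar>k\<bar> * Dk (H G) (H G) k m \<le> Dk (H (W * G)) (H (W * G)) k m"
proof (cases "0 \<le> k + int m")
  case True
  define l where "l = nat (k + int m)"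
  have "nat \<bar>k\<bar> \<le> l + m" using True by (simp add: l_def)
  then have "W ^ nat \<bar>k\<bar> \<le> W ^ (l + m)" using assms by (intro power_increasing) auto
  then have "W ^ nat \<bar>k\<bar> * (H G l * H G m) \<le> W ^ (l + m) * (H G l * H G m)"
    using assms by (intro mult_right_mono) (auto simp: H_nonneg)
  also have "\<dots> = (H G l * W ^ l) * (H G m * W ^ m)" by (simp add: power_add algebra_simps)
  also have "\<dots> = H (G * W) l * H (G * W) m" by (simp only: H_mult)
  also have "\<dots> = H (W * G) l * H (W * G) m" by (simp only: mult.commute)
  finally show ?thesis using True by (simp add: Dk_def l_def)
qed (simp add: Dk_def)

lemma SW:
  assumes J: "finite J" and inj: "inj_on \<kappa> J" and W: "1 \<le> W" and G: "0 \<le> G"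
  shows "(\<Sum>j\<in>J. W ^ nat \<bar>\<kappa> j\<bar> * suminf (Dk (H G) (H G) (\<kappa> j))) \<le> exp (W * G) * exp (W * G)"
proof -
  define G' where "G' = W * G"
  have G': "0 \<le> G'" using W G by (simp add: G'_def)
  have "(\<Sum>j\<in>J. W ^ nat \<bar>\<kappa> j\<bar> * suminf (Dk (H G) (H G) (\<kappa> j)))
      = (\<Sum>j\<in>J. \<Sum>m. W ^ nat \<bar>\<kappa> j\<bar> * Dk (H G) (H G) (\<kappa> j) m)"
    using G by (intro sum.cong refl suminf_mult[symmetric] Dk_H_summable)
  also have "\<dots> = (\<Sum>m. \<Sum>j\<in>J. W ^ nat \<bar>\<kappa> j\<bar> * Dk (H G) (H G) (\<kappa> j) m)"
    using G by (intro suminf_sum[symmetric] summable_mult Dk_H_summable)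
  also have "\<dots> \<le> (\<Sum>m. H G' m * exp G')"
  proof (rule suminf_le)
    show "summable (\<lambda>m. \<Sum>j\<in>J. W ^ nat \<bar>\<kappa> j\<bar> * Dk (H G) (H G) (\<kappa> j) m)"
      using G by (intro summable_sum summable_mult Dk_H_summable)
    show "summable (\<lambda>m. H G' m * exp G')" by (intro summable_mult2 H_summable)
    fix m
    have "(\<Sum>j\<in>J. W ^ nat \<bar>\<kappa> j\<bar> * Dk (H G) (H G) (\<kappa> j) m) \<le> (\<Sum>j\<in>J. Dk (H G') (H G') (\<kappa> j) m)"
      using W G by (intro sum_mono) (simp add: Dk_weight G'_def)
    also have "\<dots> = (\<Sum>j\<in>{j\<in>J. 0 \<le> \<kappa> j + int m}. H G' (nat (\<kappa> j + int m))) * H G' m"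
      by (simp add: Dk_def sum.inter_filter[OF J, symmetric] sum_distrib_right if_distrib cong: if_cong)
    also have "\<dots> \<le> exp G' * H G' m"
    proof (rule mult_right_mono)
      define J' where "J' = {j\<in>J. 0 \<le> \<kappa> j + int m}"
      define \<phi> where "\<phi> = (\<lambda>j. nat (\<kappa> j + int m))"
      have "inj_on \<phi> J'"
      proof (rule inj_onI)
        fix x y assume "x \<in> J'" "y \<in> J'" "\<phi> x = \<phi> y"
        then have "\<kappa> x = \<kappa> y" by (auto simp: J'_def \<phi>_def eq_nat_nat_iff)
        then show "x = y" using inj \<open>x \<in> J'\<close> \<open>y \<in> J'\<close> by (auto simp: J'_def dest: inj_onD)
      qed
      then have "(\<Sum>j\<in>J'. H G' (\<phi> j)) = sum (H G') (\<phi> ` J')" by (simp add: sum.reindex)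
      also have "\<dots> \<le> suminf (H G')"
        using J G' by (intro sum_le_suminf H_summable) (auto simp: J'_def H_nonneg)
      finally show "(\<Sum>j\<in>{j\<in>J. 0 \<le> \<kappa> j + int m}. H G' (nat (\<kappa> j + int m))) \<le> exp G'"
        by (simp add: J'_def \<phi>_def H_suminf)
    qed (use G' in \<open>simp add: H_nonneg\<close>)
    finally show "(\<Sum>j\<in>J. W ^ nat \<bar>\<kappa> j\<bar> * Dk (H G) (H G) (\<kappa> j) m) \<le> H G' m * exp G'" by (simp add: mult.commute)
  qed
  also have "\<dots> = exp G' * exp G'" using H_summable by (simp add: suminf_mult2[symmetric] H_suminf)
  finally show ?thesis by (simp add: G'_def)
qed



lemma pdiff_Dk: "pdiff \<mu> \<nu> z k = suminf (Dk (poi (\<mu> * (1 - z))) (poi (\<nu> * z)) k)"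
  unfolding pdiff_def Dk_def by simp

lemma poi_Dk_summable: "0 \<le> a \<Longrightarrow> 0 \<le> b \<Longrightarrow> summable (Dk (poi a) (poi b) k)"
  by (rule Dk_summable[where B = "exp a" and h = "H b"])
     (auto simp: poi_nonneg abs_of_nonneg poi_le_H H_summable intro: order_trans[OF poi_le_H H_le_exp])

lemma poi_Dk_nonneg: "0 \<le> a \<Longrightarrow> 0 \<le> b \<Longrightarrow> 0 \<le> Dk (poi a) (poi b) k m"
  by (intro Dk_nonneg poi_nonneg)

lemma poi_Dk_pos:
  assumes "0 < a" "0 < b"
  shows "0 < suminf (Dk (poi a) (poi b) k)"
proof (rule suminf_pos2[where i = "nat \<bar>k\<bar>"])
  show "summable (Dk (poi a) (poi b) k)" using assms by (intro poi_Dk_summable) auto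
  show "\<And>n. 0 \<le> Dk (poi a) (poi b) k n" using assms by (intro poi_Dk_nonneg) auto
  show "0 < Dk (poi a) (poi b) k (nat \<bar>k\<bar>)" using assms by (simp add: Dk_def poi_def)
qed

lemma poi_shift: "0 < b \<Longrightarrow> poi a (m + k) * poi b m = (a / b) ^ k * (poi a m * poi b (m + k))"
  by (simp add: poi_def power_add field_simps power_divide)

lemma poi_Dk_ratio:
  assumes a: "0 < a" and b: "0 < b"
  shows "suminf (Dk (poi a) (poi b) (int k)) = (a / b) ^ k * suminf (Dk (poi a) (poi b) (- int k))"
proof -
  have s: "summable (Dk (poi a) (poi b) (- int k))" using a b by (intro poi_Dk_summable) auto
  have "suminf (Dk (poi a) (poi b) (- int k)) = (\<Sum>t. Dk (poi a) (poi b) (- int k) (t + k)) + (\<Sum>i<k. Dk (poi a) (poi b) (- int k) i)"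
    using s by (rule suminf_split_initial_segment)
  also have "(\<Sum>i<k. Dk (poi a) (poi b) (- int k) i) = 0" by (intro sum.neutral) (auto simp: Dk_def)
  also have "(\<lambda>t. Dk (poi a) (poi b) (- int k) (t + k)) = (\<lambda>t. poi a t * poi b (t + k))"
    by (auto simp: Dk_def fun_eq_iff)
  finally have d: "suminf (Dk (poi a) (poi b) (- int k)) = (\<Sum>t. poi a t * poi b (t + k))" by simp
  have s2: "summable (\<lambda>t. poi a t * poi b (t + k))"
    using summable_ignore_initial_segment[OF s, of k] by (simp add: Dk_def)
  have "Dk (poi a) (poi b) (int k) = (\<lambda>m. (a / b) ^ k * (poi a m * poi b (m + k)))"
    using b by (auto simp: Dk_def fun_eq_iff nat_int_add poi_shift add.commute)
  then have "suminf (Dk (poi a) (poi b) (int k)) = (a / b) ^ k * (\<Sum>t. poi a t * poi b (t + k))"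
    using s2 by (simp add: suminf_mult)
  then show ?thesis using d by simp
qed

lemma poi_Dk_ratio_le:
  assumes a: "0 < a" and b: "0 < b" and t1: "a / b \<le> T" and t2: "b / a \<le> T"
  shows "suminf (Dk (poi a) (poi b) k) \<le> T ^ nat \<bar>k\<bar> * suminf (Dk (poi a) (poi b) (- k))"
proof (cases "0 \<le> k")
  case True
  then obtain n where k: "k = int n" by (metis nonneg_eq_int)
  have "suminf (Dk (poi a) (poi b) k) = (a / b) ^ n * suminf (Dk (poi a) (poi b) (- k))"
    using poi_Dk_ratio[OF a b, of n] k by simp
  also have "\<dots> \<le> T ^ n * suminf (Dk (poi a) (poi b) (- k))"
    using a b t1 by (intro mult_right_mono power_mono suminf_nonneg poi_Dk_summable poi_Dk_nonneg) auto
  finally show ?thesis using k by simp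
next
  case False
  then have "0 \<le> - k" by simp
  then obtain n where "- k = int n" by (metis nonneg_eq_int)
  then have k: "k = - int n" by simp
  have e: "suminf (Dk (poi a) (poi b) (int n)) = (a / b) ^ n * suminf (Dk (poi a) (poi b) (- int n))"
    using poi_Dk_ratio[OF a b, of n] by simp
  have "suminf (Dk (poi a) (poi b) k) = (b / a) ^ n * suminf (Dk (poi a) (poi b) (- k))"
    using e k a b by (simp add: power_divide field_simps)
  also have "\<dots> \<le> T ^ n * suminf (Dk (poi a) (poi b) (- k))"
    using a b t2 by (intro mult_right_mono power_mono suminf_nonneg poi_Dk_summable poi_Dk_nonneg) auto
  finally show ?thesis using k by simp
qed



lemma bn_zero: "n < l \<Longrightarrow> bn n p l = 0" by (simp add: bn_def)

lemma bn_alt: "l \<le> n \<Longrightarrow> p \<noteq> 1 \<Longrightarrow>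
   (1 - p) ^ n * (real (n choose l) * (p / (1 - p)) ^ l) = bn n p l"
proof -
  assume l: "l \<le> n" and p: "p \<noteq> 1"
  have "(1 - p) ^ n = (1 - p) ^ l * (1 - p) ^ (n - l)" using l by (simp add: power_add[symmetric])
  moreover have "(1 - p) ^ l * (p / (1 - p)) ^ l = p ^ l" using p by (simp add: power_divide[symmetric] power_mult_distrib[symmetric])
  ultimately show ?thesis by (simp add: bn_def algebra_simps)
qed

lemma Pmat_Dk:
  assumes v: "\<mu> / real N \<noteq> 1" and w: "\<nu> / real N \<noteq> 1"
  shows "Pmat \<mu> \<nu> N i j = suminf (Dk (bn (N - i) (\<mu> / real N)) (bn i (\<nu> / real N)) (int j - int i))"
proof -
  define v where "v = \<mu> / real N"
  define w where "w = \<nu> / real N"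
  define n1 where "n1 = N - i"
  define k where "k = int j - int i"
  define S where "S = {(l, m). l \<le> n1 \<and> m \<le> i \<and> int l - int m = k}"
  define T where "T = {m. m \<le> i \<and> 0 \<le> k + int m \<and> nat (k + int m) \<le> n1}"
  have v1: "v \<noteq> 1" and w1: "w \<noteq> 1" using v w by (auto simp: v_def w_def)
  have "Pmat \<mu> \<nu> N i j = (1 - v) ^ n1 * (1 - w) ^ i *
      (\<Sum>(l, m) \<in> S. real (n1 choose l) * real (i choose m) * (v / (1 - v)) ^ l * (w / (1 - w)) ^ m)"
    by (simp add: Pmat_def Let_def v_def w_def n1_def k_def S_def)
  also have "\<dots> = (\<Sum>(l, m) \<in> S. bn n1 v l * bn i w m)"
    unfolding sum_distrib_left
  proof (rule sum.cong[OF refl], clarify)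
    fix l m assume "(l, m) \<in> S"
    then have lm: "l \<le> n1" "m \<le> i" by (auto simp: S_def)
    have "(1 - v) ^ n1 * (1 - w) ^ i * (real (n1 choose l) * real (i choose m) * (v / (1 - v)) ^ l * (w / (1 - w)) ^ m)
        = ((1 - v) ^ n1 * (real (n1 choose l) * (v / (1 - v)) ^ l)) * ((1 - w) ^ i * (real (i choose m) * (w / (1 - w)) ^ m))"
      by (simp add: algebra_simps)
    also have "\<dots> = bn n1 v l * bn i w m" using lm v1 w1 by (simp add: bn_alt)
    finally show "(1 - v) ^ n1 * (1 - w) ^ i * (real (n1 choose l) * real (i choose m) * (v / (1 - v)) ^ l * (w / (1 - w)) ^ m) = bn n1 v l * bn i w m" .
  qed
  also have "S = (\<lambda>m. (nat (k + int m), m)) ` T"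
  proof (rule set_eqI, rule iffI)
    fix x assume "x \<in> S"
    then obtain l m where x: "x = (l, m)" "l \<le> n1" "m \<le> i" "int l - int m = k" by (auto simp: S_def)
    then have h: "l = nat (k + int m)" "0 \<le> k + int m" by simp_all
    have "m \<in> T" using h x(2,3) by (simp add: T_def)
    then show "x \<in> (\<lambda>m. (nat (k + int m), m)) ` T" using x(1) h(1) by auto
  next
    fix x assume "x \<in> (\<lambda>m. (nat (k + int m), m)) ` T"
    then show "x \<in> S" by (auto simp: S_def T_def)
  qed
  also have "(\<Sum>(l, m) \<in> (\<lambda>m. (nat (k + int m), m)) ` T. bn n1 v l * bn i w m) = (\<Sum>m\<in>T. Dk (bn n1 v) (bn i w) k m)"
    by (subst sum.reindex) (auto simp: inj_on_def T_def Dk_def)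
  also have "\<dots> = (\<Sum>m\<in>{..i}. Dk (bn n1 v) (bn i w) k m)"
  proof (rule sum.mono_neutral_left)
    show "\<forall>m\<in>{..i} - T. Dk (bn n1 v) (bn i w) k m = 0"
    proof
      fix m assume m: "m \<in> {..i} - T"
      show "Dk (bn n1 v) (bn i w) k m = 0"
      proof (cases "0 \<le> k + int m")
        case True
        then have "n1 < nat (k + int m)" using m by (auto simp: T_def)
        then show ?thesis by (simp add: Dk_def bn_zero)
      qed (simp add: Dk_def)
    qed
  qed (auto simp: T_def)
  also have "\<dots> = suminf (Dk (bn n1 v) (bn i w) k)"
    by (rule suminf_finite[symmetric]) (auto simp: Dk_def bn_zero)
  finally show ?thesis by (simp add: v_def w_def n1_def k_def)
qed



lemma sqrt_diff_le: "0 \<le> b \<Longrightarrow> 0 \<le> d \<Longrightarrow> \<bar>sqrt b - sqrt d\<bar> * sqrt d \<le> \<bar>b - d\<bar>"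
proof -
  assume b: "0 \<le> b" and d: "0 \<le> d"
  have "b - d = (sqrt b - sqrt d) * (sqrt b + sqrt d)"
    using b d by (simp add: algebra_simps)
  then have "\<bar>b - d\<bar> = \<bar>sqrt b - sqrt d\<bar> * (sqrt b + sqrt d)"
    using b d by (simp add: abs_mult)
  also have "\<dots> \<ge> \<bar>sqrt b - sqrt d\<bar> * sqrt d" using b by (intro mult_left_mono) auto
  finally show ?thesis .
qed

lemma SQ:
  fixes a b c d E T :: real
  assumes "0 \<le> a" "0 \<le> b" "0 < c" "0 < d" "a \<le> E * c" "c \<le> T * d" "d \<le> T * c" "1 \<le> E" "1 \<le> T"
  shows "\<bar>sqrt (a * b) - sqrt (c * d)\<bar> \<le> sqrt E * T * (\<bar>a - c\<bar> + \<bar>b - d\<bar>)"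
proof -
  have sE: "1 \<le> sqrt E" using assms(8) by simp
  have sT1: "1 \<le> sqrt T" using assms(9) by simp
  have "sqrt T * 1 \<le> sqrt T * sqrt T" using sT1 by (intro mult_left_mono) auto
  then have sT: "sqrt T \<le> T" using assms(9) by simp
  have "sqrt (a * b) - sqrt (c * d) = sqrt a * (sqrt b - sqrt d) + sqrt d * (sqrt a - sqrt c)"
    by (simp add: real_sqrt_mult algebra_simps)
  then have "\<bar>sqrt (a * b) - sqrt (c * d)\<bar> \<le> \<bar>sqrt a * (sqrt b - sqrt d)\<bar> + \<bar>sqrt d * (sqrt a - sqrt c)\<bar>"
    by (simp only: abs_triangle_ineq)
  also have "\<dots> = sqrt a * \<bar>sqrt b - sqrt d\<bar> + sqrt d * \<bar>sqrt a - sqrt c\<bar>"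
    using assms(1,4) by (simp add: abs_mult)
  also have "sqrt a * \<bar>sqrt b - sqrt d\<bar> \<le> sqrt E * sqrt T * \<bar>b - d\<bar>"
  proof -
    have "sqrt a \<le> sqrt E * sqrt T * sqrt d"
    proof -
      have "E * c \<le> E * (T * d)" using assms(6,8) by (intro mult_left_mono) auto
      then have "a \<le> E * (T * d)" using assms(5) by linarith
      then show ?thesis by (simp add: real_sqrt_mult[symmetric])
    qed
    then have "sqrt a * \<bar>sqrt b - sqrt d\<bar> \<le> (sqrt E * sqrt T * sqrt d) * \<bar>sqrt b - sqrt d\<bar>"
      by (rule mult_right_mono) auto
    then have "sqrt a * \<bar>sqrt b - sqrt d\<bar> \<le> sqrt E * sqrt T * (\<bar>sqrt b - sqrt d\<bar> * sqrt d)"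
      by (simp add: algebra_simps)
    also have "\<dots> \<le> sqrt E * sqrt T * \<bar>b - d\<bar>"
      using assms by (intro mult_left_mono sqrt_diff_le) auto
    finally show ?thesis .
  qed
  also have "sqrt d * \<bar>sqrt a - sqrt c\<bar> \<le> sqrt T * \<bar>a - c\<bar>"
  proof -
    have "sqrt d \<le> sqrt T * sqrt c" using assms by (simp add: real_sqrt_mult[symmetric])
    then have "sqrt d * \<bar>sqrt a - sqrt c\<bar> \<le> (sqrt T * sqrt c) * \<bar>sqrt a - sqrt c\<bar>"
      by (rule mult_right_mono) auto
    then have "sqrt d * \<bar>sqrt a - sqrt c\<bar> \<le> sqrt T * (\<bar>sqrt a - sqrt c\<bar> * sqrt c)"
      by (simp add: algebra_simps)
    also have "\<dots> \<le> sqrt T * \<bar>a - c\<bar>"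
      using assms by (intro mult_left_mono sqrt_diff_le) auto
    finally show ?thesis .
  qed
  also have "sqrt E * sqrt T * \<bar>b - d\<bar> + sqrt T * \<bar>a - c\<bar> \<le> sqrt E * T * \<bar>b - d\<bar> + sqrt E * T * \<bar>a - c\<bar>"
  proof -
    have "T * 1 \<le> T * sqrt E" using sE assms(9) by (intro mult_left_mono) auto
    then have x: "sqrt T \<le> sqrt E * T" using sT by (simp add: mult.commute)
    have y: "sqrt E * sqrt T \<le> sqrt E * T" using sT sE by (intro mult_left_mono) auto
    show ?thesis using x y by (intro add_mono mult_right_mono) auto
  qed
  finally show ?thesis by (simp add: algebra_simps)
qed



lemma term_bound:
  fixes \<mu> \<nu> \<delta> :: real and N i j :: nat
  assumes mu: "0 < \<mu>" and nu: "0 < \<nu>" and Nbig: "real N > max \<mu> \<nu>" and iN: "i \<le> N" and jN: "j \<le> N"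
    and d0: "0 < \<delta>" and z1: "\<delta> \<le> real i / real N" and z2: "real i / real N \<le> 1 - \<delta>"
  defines "M \<equiv> max \<mu> \<nu> + 1" and "T \<equiv> 1 + \<mu> / (\<nu> * \<delta>) + \<nu> / (\<mu> * \<delta>)" and "k \<equiv> int j - int i"
  shows "\<bar>sqrt (Pmat \<mu> \<nu> N i j * Pmat \<mu> \<nu> N j i)
            - sqrt (pdiff \<mu> \<nu> (real i / real N) (int j - int i) * pdiff \<mu> \<nu> (real i / real N) (int i - int j))\<bar>
     \<le> sqrt (exp M * exp M) * T ^ nat \<bar>k\<bar> * (6 * (M + 1) * M * (1 + real (nat \<bar>k\<bar>)) / real N) *
        (suminf (Dk (H (3 * M)) (H (3 * M)) k) + suminf (Dk (H (3 * M)) (H (3 * M)) (- k)))"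
proof -
  define K where "K = real (nat \<bar>k\<bar>)"
  define v where "v = \<mu> / real N"
  define w where "w = \<nu> / real N"
  define z where "z = real i / real N"
  define l1 where "l1 = \<mu> * (1 - z)"
  define l2 where "l2 = \<nu> * z"
  define h where "h = H (3 * M)"
  define S where "S = (\<lambda>k. suminf (Dk h h k))"
  have Npos: "0 < real N" using Nbig mu by linarith
  have M1: "1 \<le> M" and muM: "\<mu> \<le> M" and nuM: "\<nu> \<le> M" using mu nu by (auto simp: M_def)
  have v0: "0 \<le> v" "v \<le> 1" "v \<noteq> 1" and w0: "0 \<le> w" "w \<le> 1" "w \<noteq> 1"
    using Nbig mu nu Npos by (auto simp: v_def w_def field_simps)
  have vM: "v \<le> M / real N" and wM: "w \<le> M / real N"
    using muM nuM Npos by (auto simp: v_def w_def divide_right_mono)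
  have l1e: "l1 = real (N - i) * v" using iN Npos by (simp add: l1_def v_def z_def of_nat_diff field_simps)
  have l2e: "l2 = real i * w" using Npos by (simp add: l2_def w_def z_def field_simps)
  have zd: "\<delta> \<le> z" "z \<le> 1 - \<delta>" using z1 z2 by (auto simp: z_def)
  have l1lo: "\<mu> * \<delta> \<le> l1" using zd mu by (simp add: l1_def mult_left_mono)
  have l2lo: "\<nu> * \<delta> \<le> l2" using zd nu by (simp add: l2_def mult_left_mono)
  have l1hi: "l1 \<le> \<mu>" using zd mu d0 by (simp add: l1_def mult_left_le)
  have l2hi: "l2 \<le> \<nu>" using zd nu d0 by (simp add: l2_def mult_left_le)
  have l1p: "0 < l1" and l2p: "0 < l2" using l1lo l2lo mu nu d0 by (auto intro: less_le_trans[OF mult_pos_pos])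
  have l1M: "l1 \<le> M" and l2M: "l2 \<le> M" using l1hi l2hi muM nuM by auto
  have T1: "1 \<le> T" using mu nu d0 by (simp add: T_def)
  have r1: "l1 / l2 \<le> T"
  proof -
    have "l1 / l2 \<le> \<mu> / (\<nu> * \<delta>)" using l1hi l2lo l1p mu nu d0 by (intro frac_le) auto
    also have "\<dots> \<le> T" using mu nu d0 by (simp add: T_def)
    finally show ?thesis .
  qed
  have r2: "l2 / l1 \<le> T"
  proof -
    have "l2 / l1 \<le> \<nu> / (\<mu> * \<delta>)" using l2hi l1lo l2p mu nu d0 by (intro frac_le) auto
    also have "\<dots> \<le> T" using mu nu d0 by (simp add: T_def)
    finally show ?thesis .
  qed
  define a where "a = Pmat \<mu> \<nu> N i j"
  define b where "b = Pmat \<mu> \<nu> N j i"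
  define c where "c = pdiff \<mu> \<nu> z k"
  define d where "d = pdiff \<mu> \<nu> z (- k)"
  have a_eq: "a = suminf (Dk (bn (N - i) v) (bn i w) k)"
    using v0 w0 by (simp add: a_def Pmat_Dk v_def w_def k_def)
  have b_eq: "b = suminf (Dk (bn (N - j) v) (bn j w) (- k))"
    using v0 w0 by (simp add: b_def Pmat_Dk v_def w_def k_def)
  have c_eq: "c = suminf (Dk (poi l1) (poi l2) k)" by (simp add: c_def pdiff_Dk l1_def l2_def)
  have d_eq: "d = suminf (Dk (poi l1) (poi l2) (- k))" by (simp add: d_def pdiff_Dk l1_def l2_def)
  have bn_sum: "summable (Dk (bn n p) (bn n' p') kk)" if "0 \<le> p" "p \<le> 1" "0 \<le> p'" "p' \<le> 1" "real n * p \<le> M" "real n' * p' \<le> M" for n n' p p' kk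
  proof (rule Dk_summable[where B = "exp M" and h = "H M"])
    show "\<bar>bn n p l\<bar> \<le> exp M" for l
      using bn_le(3)[of p n M l] H_le_exp[of M l] M1 that bn_nonneg[of p n l] by simp
    show "\<bar>bn n' p' m\<bar> \<le> H M m" for m
      using bn_le(3)[of p' n' M m] that bn_nonneg[of p' n' m] by simp
  qed (rule H_summable)
  have NiM: "real (N - i) * v \<le> M" using l1e l1M by simp
  have iM: "real i * w \<le> M" using l2e l2M by simp
  have NjM: "real (N - j) * v \<le> M"
  proof -
    have "real (N - j) * v \<le> real N * v" using v0 by (intro mult_right_mono) auto
    also have "\<dots> = \<mu>" using Npos by (simp add: v_def)
    finally show ?thesis using muM by simp
  qed
  have jM: "real j * w \<le> M"
  proof -
    have "real j * w \<le> real N * w" using w0 jN by (intro mult_right_mono) auto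
    also have "\<dots> = \<nu>" using Npos by (simp add: w_def)
    finally show ?thesis using nuM by simp
  qed
  have sa: "summable (Dk (bn (N - i) v) (bn i w) k)" using v0 w0 NiM iM by (intro bn_sum) auto
  have sb: "summable (Dk (bn (N - j) v) (bn j w) (- k))" using v0 w0 NjM jM by (intro bn_sum) auto
  have sc: "summable (Dk (poi l1) (poi l2) k)" using l1p l2p by (intro poi_Dk_summable) auto
  have sd: "summable (Dk (poi l1) (poi l2) (- k))" using l1p l2p by (intro poi_Dk_summable) auto
  have sh: "\<And>kk. summable (Dk h h kk)" using M1 by (simp add: h_def Dk_H_summable)
  have h0: "\<And>l. 0 \<le> h l" using M1 by (simp add: h_def H_nonneg)
  have S0: "\<And>kk. 0 \<le> S kk" unfolding S_def by (intro suminf_nonneg sh Dk_nonneg h0)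
  have Hh: "\<And>x l. 0 \<le> x \<Longrightarrow> x \<le> 3 * M \<Longrightarrow> H x l \<le> h l" by (simp add: h_def H_mono)
  have bnh: "\<bar>bn n p l\<bar> \<le> 1 * h l" if "0 \<le> p" "p \<le> 1" "real n * p \<le> M" for n p l
    using that bn_le(3)[of p n M l] Hh[of M l] M1 by (simp add: bn_nonneg abs_of_nonneg)
  have poih: "\<bar>poi x l\<bar> \<le> 1 * h l" if "0 \<le> x" "x \<le> M" for x l
    using that poi_le_H[of x M l] Hh[of M l] M1 by (simp add: poi_nonneg abs_of_nonneg)
  define eA where "eA = 3 * (M + 1) * M / real N"
  define eB where "eB = (3 * (M + 1) + K) * M / real N"
  have eA0: "0 \<le> eA" using M1 Npos by (simp add: eA_def)
  have eAB: "eA \<le> eB" using M1 Npos by (simp add: eA_def eB_def K_def divide_right_mono)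
  have BPh: "\<bar>bn n p l - poi (real n * p) l\<bar> \<le> eA * h l"
    if "0 \<le> p" "p \<le> 1" "real n * p \<le> M" "p \<le> M / real N" for n p l
  proof -
    have "\<bar>bn n p l - poi (real n * p) l\<bar> \<le> p * (3 * (M + 1)) * H (3 * M) l" using that M1 by (intro BP) auto
    also have "\<dots> \<le> (M / real N) * (3 * (M + 1)) * H (3 * M) l"
      using that M1 by (intro mult_right_mono H_nonneg) auto
    finally show ?thesis by (simp add: eA_def h_def mult.commute mult.left_commute)
  qed
  have ac: "\<bar>a - c\<bar> \<le> 2 * eA * S k"
  proof -
    have "\<bar>a - c\<bar> \<le> (\<Sum>m. 2 * eA * 1 * Dk h h k m)"
    proof (unfold a_eq c_eq, rule suminf_diff_le[OF sa sc])
      show "summable (\<lambda>m. 2 * eA * 1 * Dk h h k m)" by (intro summable_mult sh)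
      fix m
      show "\<bar>Dk (bn (N - i) v) (bn i w) k m - Dk (poi l1) (poi l2) k m\<bar> \<le> 2 * eA * 1 * Dk h h k m"
      proof (rule Dk_diff)
        show "\<bar>bn (N - i) v l - poi l1 l\<bar> \<le> eA * h l" for l using BPh[of v "N - i" l] v0 NiM vM l1e by simp
        show "\<bar>bn i w m - poi l2 m\<bar> \<le> eA * h m" for m using BPh[of w i m] w0 iM wM l2e by simp
        show "\<bar>bn i w m\<bar> \<le> 1 * h m" for m using bnh w0 iM by simp
        show "\<bar>poi l1 l\<bar> \<le> 1 * h l" for l using poih l1p l1M by simp
      qed (use h0 eA0 in auto)
    qed
    also have "\<dots> = 2 * eA * S k" using sh by (simp add: S_def suminf_mult)
    finally show ?thesis .
  qed
  have bd: "\<bar>b - d\<bar> \<le> 2 * eB * S (- k)"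
  proof -
    have shift: "\<bar>bn n p l - poi l0 l\<bar> \<le> eB * h l"
      if "0 \<le> p" "p \<le> 1" "real n * p \<le> M" "p \<le> M / real N" "0 \<le> l0" "l0 \<le> M"
         "\<bar>real n * p - l0\<bar> \<le> K * (M / real N)" for n p l l0
    proof -
      have "\<bar>bn n p l - poi l0 l\<bar> \<le> \<bar>bn n p l - poi (real n * p) l\<bar> + \<bar>poi (real n * p) l - poi l0 l\<bar>"
        by linarith
      also have "\<dots> \<le> eA * h l + \<bar>real n * p - l0\<bar> * H (2 * M) l"
        using that M1 by (intro add_mono BPh poi_lip) auto
      also have "\<dots> \<le> eA * h l + (K * (M / real N)) * h l"
        using that M1 by (intro add_mono mult_mono Hh H_nonneg order_refl) auto
      also have "\<dots> = eB * h l" by (simp add: eA_def eB_def algebra_simps add_divide_distrib)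
      finally show ?thesis .
    qed
    have eB0: "0 \<le> eB" using eA0 eAB by linarith
    have kk: "\<bar>real (N - j) * v - l1\<bar> \<le> K * (M / real N)"
    proof -
      have "real (N - j) * v - l1 = (real i - real j) * v" using iN jN by (simp add: l1e of_nat_diff algebra_simps)
      then have "\<bar>real (N - j) * v - l1\<bar> = K * v" using v0 by (simp add: abs_mult K_def k_def abs_minus_commute)
      also have "\<dots> \<le> K * (M / real N)" using vM by (intro mult_left_mono) (auto simp: K_def)
      finally show ?thesis .
    qed
    have kk2: "\<bar>real j * w - l2\<bar> \<le> K * (M / real N)"
    proof -
      have "real j * w - l2 = (real j - real i) * w" by (simp add: l2e algebra_simps)
      then have "\<bar>real j * w - l2\<bar> = K * w" using w0 by (simp add: abs_mult K_def k_def)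
      also have "\<dots> \<le> K * (M / real N)" using wM by (intro mult_left_mono) (auto simp: K_def)
      finally show ?thesis .
    qed
    have "\<bar>b - d\<bar> \<le> (\<Sum>m. 2 * eB * 1 * Dk h h (- k) m)"
    proof (unfold b_eq d_eq, rule suminf_diff_le[OF sb sd])
      show "summable (\<lambda>m. 2 * eB * 1 * Dk h h (- k) m)" by (intro summable_mult sh)
      fix m
      show "\<bar>Dk (bn (N - j) v) (bn j w) (- k) m - Dk (poi l1) (poi l2) (- k) m\<bar> \<le> 2 * eB * 1 * Dk h h (- k) m"
      proof (rule Dk_diff)
        show "\<bar>bn (N - j) v l - poi l1 l\<bar> \<le> eB * h l" for l using shift v0 NjM vM l1p l1M kk by simp
        show "\<bar>bn j w m - poi l2 m\<bar> \<le> eB * h m" for m using shift w0 jM wM l2p l2M kk2 by simp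
        show "\<bar>bn j w m\<bar> \<le> 1 * h m" for m using bnh w0 jM by simp
        show "\<bar>poi l1 l\<bar> \<le> 1 * h l" for l using poih l1p l1M by simp
      qed (use h0 eB0 in auto)
    qed
    also have "\<dots> = 2 * eB * S (- k)" using sh by (simp add: S_def suminf_mult)
    finally show ?thesis .
  qed
  have a0: "0 \<le> a" unfolding a_eq using sa v0 w0 by (intro suminf_nonneg Dk_nonneg bn_nonneg) auto
  have b0: "0 \<le> b" unfolding b_eq using sb v0 w0 by (intro suminf_nonneg Dk_nonneg bn_nonneg) auto
  have c0: "0 < c" unfolding c_eq using l1p l2p by (rule poi_Dk_pos)
  have d0': "0 < d" unfolding d_eq using l1p l2p by (rule poi_Dk_pos)
  have cd: "c \<le> T ^ nat \<bar>k\<bar> * d" unfolding c_eq d_eq using l1p l2p r1 r2 by (rule poi_Dk_ratio_le)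
  have dc: "d \<le> T ^ nat \<bar>k\<bar> * c" unfolding c_eq d_eq using poi_Dk_ratio_le[OF l1p l2p r1 r2, of "- k"] by simp
  have ac_le: "a \<le> (exp M * exp M) * c"
  proof -
    have "a \<le> (\<Sum>m. (exp M * exp M) * Dk (poi l1) (poi l2) k m)"
    proof (unfold a_eq, rule suminf_le)
      fix m
      show "Dk (bn (N - i) v) (bn i w) k m \<le> exp M * exp M * Dk (poi l1) (poi l2) k m"
      proof (cases "0 \<le> k + int m")
        case True
        have "bn (N - i) v (nat (k + int m)) * bn i w m \<le> (exp M * poi l1 (nat (k + int m))) * (exp M * poi l2 m)"
          using bn_le(2)[of v "N - i" M] bn_le(2)[of w i M] v0 w0 NiM iM l1e l2e
          by (intro mult_mono) (auto simp: bn_nonneg poi_nonneg)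
        then show ?thesis using True by (simp add: Dk_def algebra_simps)
      qed (simp add: Dk_def)
    qed (use sa sc in \<open>auto intro: summable_mult\<close>)
    also have "\<dots> = (exp M * exp M) * c" using sc by (simp add: c_eq suminf_mult)
    finally show ?thesis .
  qed
  have E1: "1 \<le> exp M * exp M" using M1 by (simp add: exp_add[symmetric])
  have "\<bar>sqrt (a * b) - sqrt (c * d)\<bar> \<le> sqrt (exp M * exp M) * T ^ nat \<bar>k\<bar> * (\<bar>a - c\<bar> + \<bar>b - d\<bar>)"
    using a0 b0 c0 d0' ac_le cd dc E1 T1 by (intro SQ) auto
  also have "\<dots> \<le> sqrt (exp M * exp M) * T ^ nat \<bar>k\<bar> * (2 * eB * (S k + S (- k)))"
  proof (rule mult_left_mono)
    have "2 * eA * S k \<le> 2 * eB * S k" using eAB S0[of k] by (intro mult_right_mono) auto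
    then show "\<bar>a - c\<bar> + \<bar>b - d\<bar> \<le> 2 * eB * (S k + S (- k))" using ac bd by (simp add: algebra_simps)
  qed (use T1 in auto)
  also have "2 * eB \<le> 6 * (M + 1) * M * (1 + K) / real N"
    using M1 Npos by (simp add: eB_def K_def field_simps)
  then have "sqrt (exp M * exp M) * T ^ nat \<bar>k\<bar> * (2 * eB * (S k + S (- k)))
      \<le> sqrt (exp M * exp M) * T ^ nat \<bar>k\<bar> * (6 * (M + 1) * M * (1 + K) / real N * (S k + S (- k)))"
    using T1 S0[of k] S0[of "- k"] by (intro mult_left_mono mult_right_mono add_nonneg_nonneg) auto
  finally show ?thesis
    by (simp add: a_def b_def c_def d_def z_def k_def S_def h_def K_def mult.assoc)
qed



lemma one_plus_le_pow2: "1 + real n \<le> 2 ^ n"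
  by (induction n) auto

theorem proposition4:
  fixes \<mu> \<nu> :: real
  assumes "\<mu> > 0" and "\<nu> > 0"
  shows "\<forall>\<delta>::real. 0 < \<delta> \<and> \<delta> < 1/2 \<longrightarrow>
    (\<exists>C::real. \<forall>N::nat. \<forall>i::nat.
       real N > max \<mu> \<nu> \<and> i \<le> N \<and> \<delta> \<le> real i / real N \<and> real i / real N \<le> 1 - \<delta> \<longrightarrow>
       (\<Sum>j\<in>{0..N}. \<bar>sqrt (Pmat \<mu> \<nu> N i j * Pmat \<mu> \<nu> N j i)
            - sqrt (pdiff \<mu> \<nu> (real i / real N) (int j - int i)
                    * pdiff \<mu> \<nu> (real i / real N) (int i - int j))\<bar>) \<le> C / real N)"
proof (intro allI impI)
  fix \<delta> :: real
  assume "0 < \<delta> \<and> \<delta> < 1/2"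
  then have d0: "0 < \<delta>" by simp
  define M where "M = max \<mu> \<nu> + 1"
  define T where "T = 1 + \<mu> / (\<nu> * \<delta>) + \<nu> / (\<mu> * \<delta>)"
  define A where "A = sqrt (exp M * exp M) * (6 * (M + 1) * M)"
  define G where "G = exp (2 * T * (3 * M)) * exp (2 * T * (3 * M))"
  define S where "S = (\<lambda>k. suminf (Dk (H (3 * M)) (H (3 * M)) k))"
  have M1: "1 \<le> M" using assms by (simp add: M_def)
  have T1: "1 \<le> T" using assms d0 by (simp add: T_def)
  have A0: "0 \<le> A" using M1 by (simp add: A_def)
  have S0: "\<And>k. 0 \<le> S k" unfolding S_def using M1 by (intro suminf_nonneg Dk_H_summable Dk_nonneg H_nonneg) auto
  show "\<exists>C::real. \<forall>N::nat. \<forall>i::nat.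
       real N > max \<mu> \<nu> \<and> i \<le> N \<and> \<delta> \<le> real i / real N \<and> real i / real N \<le> 1 - \<delta> \<longrightarrow>
       (\<Sum>j\<in>{0..N}. \<bar>sqrt (Pmat \<mu> \<nu> N i j * Pmat \<mu> \<nu> N j i)
            - sqrt (pdiff \<mu> \<nu> (real i / real N) (int j - int i)
                    * pdiff \<mu> \<nu> (real i / real N) (int i - int j))\<bar>) \<le> C / real N"
  proof (intro exI[of _ "A * (2 * G)"] allI impI)
    fix N i :: nat
    assume h: "real N > max \<mu> \<nu> \<and> i \<le> N \<and> \<delta> \<le> real i / real N \<and> real i / real N \<le> 1 - \<delta>"
    have Npos: "0 < real N" using h assms by linarith
    define kf where "kf = (\<lambda>j::nat. int j - int i)"
    have "(\<Sum>j\<in>{0..N}. \<bar>sqrt (Pmat \<mu> \<nu> N i j * Pmat \<mu> \<nu> N j i)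
            - sqrt (pdiff \<mu> \<nu> (real i / real N) (int j - int i)
                    * pdiff \<mu> \<nu> (real i / real N) (int i - int j))\<bar>)
        \<le> (\<Sum>j\<in>{0..N}. A / real N * ((2 * T) ^ nat \<bar>kf j\<bar> * S (kf j) + (2 * T) ^ nat \<bar>- kf j\<bar> * S (- kf j)))"
    proof (rule sum_mono)
      fix j assume j: "j \<in> {0..N}"
      define K where "K = nat \<bar>kf j\<bar>"
      have "\<bar>sqrt (Pmat \<mu> \<nu> N i j * Pmat \<mu> \<nu> N j i)
            - sqrt (pdiff \<mu> \<nu> (real i / real N) (int j - int i)
                    * pdiff \<mu> \<nu> (real i / real N) (int i - int j))\<bar>
          \<le> sqrt (exp M * exp M) * T ^ K * (6 * (M + 1) * M * (1 + real K) / real N) * (S (kf j) + S (- kf j))"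
        using term_bound[OF assms h[THEN conjunct1] _ _ d0, of i j] h j
        by (simp add: M_def T_def S_def K_def kf_def)
      also have "\<dots> = A / real N * ((T ^ K * (1 + real K)) * (S (kf j) + S (- kf j)))"
        using Npos by (simp add: A_def field_simps)
      also have "\<dots> \<le> A / real N * ((2 * T) ^ K * (S (kf j) + S (- kf j)))"
      proof -
        have "T ^ K * (1 + real K) \<le> T ^ K * 2 ^ K" using T1 one_plus_le_pow2[of K] by (intro mult_left_mono) auto
        then have "T ^ K * (1 + real K) \<le> (2 * T) ^ K" by (simp add: power_mult_distrib mult.commute)
        then show ?thesis using A0 Npos S0[of "kf j"] S0[of "- kf j"] by (intro mult_left_mono mult_right_mono) auto
      qed
      finally show "\<bar>sqrt (Pmat \<mu> \<nu> N i j * Pmat \<mu> \<nu> N j i)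
            - sqrt (pdiff \<mu> \<nu> (real i / real N) (int j - int i)
                    * pdiff \<mu> \<nu> (real i / real N) (int i - int j))\<bar>
          \<le> A / real N * ((2 * T) ^ nat \<bar>kf j\<bar> * S (kf j) + (2 * T) ^ nat \<bar>- kf j\<bar> * S (- kf j))"
        by (simp add: K_def algebra_simps)
    qed
    also have "\<dots> = A / real N * ((\<Sum>j\<in>{0..N}. (2 * T) ^ nat \<bar>kf j\<bar> * S (kf j)) + (\<Sum>j\<in>{0..N}. (2 * T) ^ nat \<bar>- kf j\<bar> * S (- kf j)))"
      by (simp only: sum.distrib[symmetric] sum_distrib_left)
    also have "\<dots> \<le> A / real N * (G + G)"
    proof (intro mult_left_mono add_mono)
      show "(\<Sum>j\<in>{0..N}. (2 * T) ^ nat \<bar>kf j\<bar> * S (kf j)) \<le> G"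
        unfolding S_def G_def using T1 M1 by (intro SW) (auto simp: inj_on_def kf_def)
      show "(\<Sum>j\<in>{0..N}. (2 * T) ^ nat \<bar>- kf j\<bar> * S (- kf j)) \<le> G"
        unfolding S_def G_def using T1 M1 by (intro SW) (auto simp: inj_on_def kf_def)
    qed (use A0 Npos in auto)
    also have "\<dots> = A * (2 * G) / real N" by simp
    finally show "(\<Sum>j\<in>{0..N}. \<bar>sqrt (Pmat \<mu> \<nu> N i j * Pmat \<mu> \<nu> N j i)
            - sqrt (pdiff \<mu> \<nu> (real i / real N) (int j - int i)
                    * pdiff \<mu> \<nu> (real i / real N) (int i - int j))\<bar>) \<le> A * (2 * G) / real N" .
  qed
qed


end
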